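(* For every ordinal $\alpha$: if $y\in E_{\alpha+1}$ and $x\in y$, then $x\in E_\alpha$.
   Context: Let $\mathrm{fun}(f,a,b)$ be the bounded formula expressing that $f$ is a function from $a$ to $b$: $f\subseteq a\times b\wedge(\forall y\in a)(\exists z\in b)((y,z)\in f)\wedge(\forall y\in a)(\forall z_1,z_2\in b)[((y,z_1)\in f\wedge(y,z_2)\in f)\to z_1=z_2]$, with Kuratowski pairs $(u,v)=\{\{u,v\},\{u\}\}$. The exponentiation hierarchy: $E_0=\emptyset$; $E_1=\{\emptyset\}$; $E_{\alpha+2}=\{X: X\text{ definable over }\langle E_{\alpha+1},\in\rangle\text{ with parameters}\}\cup\{f:\mathrm{fun}(f,a,b)\text{ for some }a,b\in E_\alpha\}$; $E_\lambda=\bigcup_{\beta<\lambda}E_\beta$ for limit $\lambda$; $E_{\lambda+1}=\{X: X\text{ definable over }\langle E_\lambda,\in\rangle\text{ with parameters}\}$ for limit $\lambda$. *)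

theory Defs
  imports Main
begin

text \<open>We work inside a well-founded model of ZF: a type 'v with a membership
relation mem.  First-order formulas in the language {\<in>, =} with de Bruijn variables.\<close>

datatype fm = FMem nat nat | FEq nat nat | FNeg fm | FConj fm fm | FEx fm

fun sat :: "'v set \<Rightarrow> ('v \<Rightarrow> 'v \<Rightarrow> bool) \<Rightarrow> fm \<Rightarrow> (nat \<Rightarrow> 'v) \<Rightarrow> bool" where
  "sat A mem (FMem i j) env = mem (env i) (env j)"
| "sat A mem (FEq i j) env = (env i = env j)"
| "sat A mem (FNeg \<phi>) env = (\<not> sat A mem \<phi> env)"
| "sat A mem (FConj \<phi> \<psi>) env = (sat A mem \<phi> env \<and> sat A mem \<psi> env)"
| "sat A mem (FEx \<phi>) env = (\<exists>x\<in>A. sat A mem \<phi> (case_nat x env))"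

text \<open>A subset S of A is definable over (A, mem) with parameters from A:
variable 0 is the defined element, the other variables are parameters.\<close>
definition definable_subset :: "('v \<Rightarrow> 'v \<Rightarrow> bool) \<Rightarrow> 'v set \<Rightarrow> 'v set \<Rightarrow> bool" where
  "definable_subset mem A S \<longleftrightarrow>
     (\<exists>\<phi> env. (\<forall>i. env i \<in> A) \<and> S = {x\<in>A. sat A mem \<phi> (case_nat x env)})"

definition definable_over :: "('v \<Rightarrow> 'v \<Rightarrow> bool) \<Rightarrow> 'v set \<Rightarrow> 'v \<Rightarrow> bool" where
  "definable_over mem A X \<longleftrightarrow> definable_subset mem A {z. mem z X}"

definition is_empty :: "('v \<Rightarrow> 'v \<Rightarrow> bool) \<Rightarrow> 'v \<Rightarrow> bool" where
  "is_empty mem e \<longleftrightarrow> (\<forall>z. \<not> mem z e)"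

definition is_upair :: "('v \<Rightarrow> 'v \<Rightarrow> bool) \<Rightarrow> 'v \<Rightarrow> 'v \<Rightarrow> 'v \<Rightarrow> bool" where
  "is_upair mem p a b \<longleftrightarrow> (\<forall>z. mem z p \<longleftrightarrow> z = a \<or> z = b)"

definition is_kpair :: "('v \<Rightarrow> 'v \<Rightarrow> bool) \<Rightarrow> 'v \<Rightarrow> 'v \<Rightarrow> 'v \<Rightarrow> bool" where
  "is_kpair mem p u v \<longleftrightarrow>
     (\<exists>c d. is_upair mem c u v \<and> is_upair mem d u u \<and> is_upair mem p c d)"

definition pair_in :: "('v \<Rightarrow> 'v \<Rightarrow> bool) \<Rightarrow> 'v \<Rightarrow> 'v \<Rightarrow> 'v \<Rightarrow> bool" where
  "pair_in mem u v f \<longleftrightarrow> (\<exists>p. mem p f \<and> is_kpair mem p u v)"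

definition is_fun :: "('v \<Rightarrow> 'v \<Rightarrow> bool) \<Rightarrow> 'v \<Rightarrow> 'v \<Rightarrow> 'v \<Rightarrow> bool" where
  "is_fun mem f a b \<longleftrightarrow>
     (\<forall>p. mem p f \<longrightarrow> (\<exists>u v. mem u a \<and> mem v b \<and> is_kpair mem p u v)) \<and>
     (\<forall>y. mem y a \<longrightarrow> (\<exists>z. mem z b \<and> pair_in mem y z f)) \<and>
     (\<forall>y z1 z2. mem y a \<and> mem z1 b \<and> mem z2 b \<and> pair_in mem y z1 f \<and> pair_in mem y z2 f
        \<longrightarrow> z1 = z2)"

definition is_succ :: "('v \<Rightarrow> 'v \<Rightarrow> bool) \<Rightarrow> 'v \<Rightarrow> 'v \<Rightarrow> bool" where
  "is_succ mem s b \<longleftrightarrow> (\<forall>z. mem z s \<longleftrightarrow> mem z b \<or> z = b)"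

definition trans_set :: "('v \<Rightarrow> 'v \<Rightarrow> bool) \<Rightarrow> 'v \<Rightarrow> bool" where
  "trans_set mem x \<longleftrightarrow> (\<forall>y z. mem z y \<longrightarrow> mem y x \<longrightarrow> mem z x)"

text \<open>Ordinal (in the presence of foundation): transitive set of transitive sets.\<close>
definition is_ordinal :: "('v \<Rightarrow> 'v \<Rightarrow> bool) \<Rightarrow> 'v \<Rightarrow> bool" where
  "is_ordinal mem x \<longleftrightarrow> trans_set mem x \<and> (\<forall>y. mem y x \<longrightarrow> trans_set mem y)"

text \<open>Axioms of ZF (foundation follows from external well-foundedness, assumed separately).\<close>
definition ZF_model :: "('v \<Rightarrow> 'v \<Rightarrow> bool) \<Rightarrow> bool" where
  "ZF_model mem \<longleftrightarrow>
     (\<forall>x y. (\<forall>z. mem z x \<longleftrightarrow> mem z y) \<longrightarrow> x = y) \<and>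
     (\<forall>a b. \<exists>p. is_upair mem p a b) \<and>
     (\<forall>x. \<exists>u. \<forall>z. mem z u \<longleftrightarrow> (\<exists>y. mem y x \<and> mem z y)) \<and>
     (\<forall>x. \<exists>p. \<forall>z. mem z p \<longleftrightarrow> (\<forall>w. mem w z \<longrightarrow> mem w x)) \<and>
     (\<exists>I. (\<exists>e. mem e I \<and> is_empty mem e) \<and>
          (\<forall>y. mem y I \<longrightarrow> (\<exists>s. mem s I \<and> is_succ mem s y))) \<and>
     (\<forall>\<phi> env x. \<exists>s. \<forall>z. mem z s \<longleftrightarrow> mem z x \<and> sat UNIV mem \<phi> (case_nat z env)) \<and>
     (\<forall>\<phi> env x. (\<forall>u. mem u x \<longrightarrow> (\<exists>!v. sat UNIV mem \<phi> (case_nat v (case_nat u env))))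
        \<longrightarrow> (\<exists>r. \<forall>v. mem v r \<longleftrightarrow>
                (\<exists>u. mem u x \<and> sat UNIV mem \<phi> (case_nat v (case_nat u env)))))"

definition E_step :: "('v \<Rightarrow> 'v \<Rightarrow> bool) \<Rightarrow> ('v \<Rightarrow> 'v set) \<Rightarrow> 'v \<Rightarrow> 'v set" where
  "E_step mem R a =
    (if is_empty mem a then {}
     else if (\<exists>b. is_succ mem a b) then
       (let b = (THE b. is_succ mem a b) in
        if is_empty mem b then {e. is_empty mem e}
        else if (\<exists>c. is_succ mem b c) then
          (let c = (THE c. is_succ mem b c) in
           {X. definable_over mem (R b) X} \<union>
           {f. \<exists>x y. x \<in> R c \<and> y \<in> R c \<and> is_fun mem f x y})
        else {X. definable_over mem (R b) X})
     else (\<Union>b\<in>{b. mem b a}. R b))"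

definition E :: "('v \<Rightarrow> 'v \<Rightarrow> bool) \<Rightarrow> 'v \<Rightarrow> 'v set" where
  "E mem = wfrec ({(x, y). mem x y}\<^sup>+) (E_step mem)"

end

theory Submission
  imports Defs
begin

locale zfm =
  fixes mem :: "'v \<Rightarrow> 'v \<Rightarrow> bool"
  assumes wfm: "wf {(u, v). mem u v}"
    and zf: "ZF_model mem"
begin

lemma ext: "(\<And>z. mem z x \<longleftrightarrow> mem z y) \<Longrightarrow> x = y"
  using zf[unfolded ZF_model_def, THEN conjunct1] by blast

lemma upair_ex: "\<exists>p. is_upair mem p a b"
  using zf[unfolded ZF_model_def, THEN conjunct2, THEN conjunct1] by blast

lemma union_ex: "\<exists>u. \<forall>z. mem z u \<longleftrightarrow> (\<exists>y. mem y x \<and> mem z y)"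
  using zf[unfolded ZF_model_def, THEN conjunct2, THEN conjunct2, THEN conjunct1] by blast

lemma irrefl: "\<not> mem x x"
  using wf_not_refl[OF wfm, of x] by simp

lemma asym: "mem x y \<Longrightarrow> \<not> mem y x"
  using wf_not_sym[OF wfm, of x y] by simp

lemma succ_unique: "is_succ mem a b \<Longrightarrow> is_succ mem a b' \<Longrightarrow> b = b'"
  unfolding is_succ_def using asym by metis

lemma succ_mem: "is_succ mem a b \<Longrightarrow> mem b a"
  unfolding is_succ_def by blast

lemma succ_nonempty: "is_succ mem a b \<Longrightarrow> \<not> is_empty mem a"
  unfolding is_succ_def is_empty_def by blast

lemma the_succ: "is_succ mem a b \<Longrightarrow> (THE b. is_succ mem a b) = b"
  using succ_unique by blast

lemma succ_ex: "\<exists>s. is_succ mem s b"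
proof -
  obtain p where p: "is_upair mem p b b" using upair_ex by blast
  obtain q where q: "is_upair mem q b p" using upair_ex by blast
  obtain u where u: "\<forall>z. mem z u \<longleftrightarrow> (\<exists>y. mem y q \<and> mem z y)" using union_ex by blast
  have "is_succ mem u b" unfolding is_succ_def
  proof (intro allI iffI)
    fix z assume "mem z u"
    then obtain w where w: "mem w q" "mem z w" using u by blast
    have "w = b \<or> w = p" using w(1) q unfolding is_upair_def by blast
    thus "mem z b \<or> z = b" using w(2) p unfolding is_upair_def by blast
  next
    fix z assume z: "mem z b \<or> z = b"
    have bq: "mem b q" "mem p q" using q unfolding is_upair_def by blast+
    have "mem b p" using p unfolding is_upair_def by blast
    thus "mem z u" using z bq u by blast
  qed
  thus ?thesis by blast
qed

lemma empty_unique: "is_empty mem a \<Longrightarrow> is_empty mem b \<Longrightarrow> a = b"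
  unfolding is_empty_def using ext by blast

abbreviation "R \<equiv> {(u, v). mem u v}\<^sup>+"

lemma E_step_cong:
  assumes "\<And>x. (x, a) \<in> R \<Longrightarrow> F x = G x"
  shows "E_step mem F a = E_step mem G a"
proof -
  have m: "\<And>x. mem x a \<Longrightarrow> F x = G x"
    by (rule assms, rule r_into_trancl) simp
  show ?thesis
  proof (cases "\<exists>b. is_succ mem a b")
    case True
    then obtain b where b: "is_succ mem a b" by blast
    have ba: "mem b a" using succ_mem[OF b] .
    have Fb: "F b = G b" using m[OF ba] .
    show ?thesis
    proof (cases "\<exists>c. is_succ mem b c")
      case True2: True
      then obtain c where c: "is_succ mem b c" by blast
      have "mem c b" using c by (rule succ_mem)
      hence "(c, a) \<in> R" using ba by (intro trancl_into_trancl2[OF _ r_into_trancl]) simp_all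
      hence Fc: "F c = G c" by (rule assms)
      show ?thesis using True True2
        by (simp add: E_step_def the_succ[OF b] the_succ[OF c] Fb Fc Let_def)
    next
      case False
      have nb: "(\<exists>c. is_succ mem b c) = False" using False by simp
      have na: "(\<exists>b. is_succ mem a b) = True" using True by simp
      show ?thesis
        by (simp only: E_step_def the_succ[OF b] Fb Let_def nb na if_False if_True)
    qed
  next
    case False
    have eq: "(\<Union>b\<in>{b. mem b a}. F b) = (\<Union>b\<in>{b. mem b a}. G b)" using m by auto
    have na: "(\<exists>b. is_succ mem a b) = False" using False by simp
    show ?thesis unfolding E_step_def na if_False eq ..
  qed
qed

lemma E_unfold: "E mem a = E_step mem (E mem) a"
proof -
  have "E mem a = E_step mem (cut (E mem) R a) a"
    unfolding E_def by (rule wfrec[OF wf_trancl[OF wfm]])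
  also have "\<dots> = E_step mem (E mem) a"
    by (rule E_step_cong) (simp add: cut_apply)
  finally show ?thesis .
qed

lemma E_empty: "is_empty mem a \<Longrightarrow> E mem a = {}"
  by (subst E_unfold) (simp add: E_step_def)

lemma E_succ:
  assumes "is_succ mem s b"
  shows "E mem s = (if is_empty mem b then {e. is_empty mem e}
     else if (\<exists>c. is_succ mem b c) then
       {X. definable_over mem (E mem b) X} \<union>
       {f. \<exists>c x y. is_succ mem b c \<and> x \<in> E mem c \<and> y \<in> E mem c \<and> is_fun mem f x y}
     else {X. definable_over mem (E mem b) X})"
proof -
  have ne: "\<not> is_empty mem s" using succ_nonempty[OF assms] .
  show ?thesis
  proof (cases "\<exists>c. is_succ mem b c")
    case True
    then obtain c where c: "is_succ mem b c" by blast
    have "\<And>c'. is_succ mem b c' \<longleftrightarrow> c' = c" using c succ_unique by blast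
    then show ?thesis
      apply (subst E_unfold)
      using ne assms c by (auto simp: E_step_def the_succ Let_def)
  next
    case False
    then show ?thesis
      apply (subst E_unfold)
      using ne assms by (auto simp: E_step_def the_succ Let_def)
  qed
qed

lemma E_succ0: "is_succ mem s b \<Longrightarrow> is_empty mem b \<Longrightarrow> E mem s = {e. is_empty mem e}"
  by (simp add: E_succ)

lemma E_succ1: "is_succ mem s b \<Longrightarrow> \<not> is_empty mem b \<Longrightarrow> \<exists>c. is_succ mem b c \<Longrightarrow>
  E mem s = {X. definable_over mem (E mem b) X} \<union>
       {f. \<exists>c x y. is_succ mem b c \<and> x \<in> E mem c \<and> y \<in> E mem c \<and> is_fun mem f x y}"
  by (simp add: E_succ)

lemma E_succ2: "is_succ mem s b \<Longrightarrow> \<not> is_empty mem b \<Longrightarrow> \<not> (\<exists>c. is_succ mem b c) \<Longrightarrow>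
  E mem s = {X. definable_over mem (E mem b) X}"
proof -
  assume a: "is_succ mem s b" "\<not> is_empty mem b" "\<not> (\<exists>c. is_succ mem b c)"
  have nb: "(\<exists>c. is_succ mem b c) = False" using a(3) by simp
  have ne: "is_empty mem b = False" using a(2) by simp
  show ?thesis by (simp only: E_succ[OF a(1)] nb ne if_False)
qed

lemma E_lim: "\<not> is_empty mem a \<Longrightarrow> \<not> (\<exists>b. is_succ mem a b) \<Longrightarrow> E mem a = (\<Union>b\<in>{b. mem b a}. E mem b)"
proof -
  assume ne: "\<not> is_empty mem a" and ns: "\<not> (\<exists>b. is_succ mem a b)"
  have na: "(\<exists>b. is_succ mem a b) = False" using ns by simp
  have ne': "is_empty mem a = False" using ne by simp
  show ?thesis by (subst E_unfold) (simp only: E_step_def na ne' if_False)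
qed

lemma def_sub: "definable_over mem A X \<Longrightarrow> mem z X \<Longrightarrow> z \<in> A"
  unfolding definable_over_def definable_subset_def by blast

lemma def_self:
  assumes "\<And>z. mem z y \<Longrightarrow> z \<in> A" "y \<in> A"
  shows "definable_over mem A y"
  unfolding definable_over_def definable_subset_def
  apply (rule exI[of _ "FMem 0 1"], rule exI[of _ "\<lambda>_. y"])
  using assms by auto

lemma def_upair:
  assumes "u \<in> A" "v \<in> A" "is_upair mem p u v"
  shows "definable_over mem A p"
  unfolding definable_over_def definable_subset_def
  apply (rule exI[of _ "FNeg (FConj (FNeg (FEq 0 1)) (FNeg (FEq 0 2)))"],
         rule exI[of _ "case_nat u (\<lambda>_. v)"])
  using assms unfolding is_upair_def by (auto split: nat.split)

lemma S: "is_succ mem s c \<Longrightarrow> definable_over mem (E mem c) X \<Longrightarrow> X \<in> E mem s"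
  apply (cases "is_empty mem c")
   apply (simp add: E_succ0 E_empty)
   apply (auto simp: is_empty_def dest: def_sub)[1]
  apply (cases "\<exists>d. is_succ mem c d")
   apply (simp add: E_succ1)
  by (simp add: E_succ2)

lemma upair_in: "u \<in> E mem d \<Longrightarrow> v \<in> E mem d \<Longrightarrow> is_succ mem e d \<Longrightarrow> is_upair mem c u v \<Longrightarrow> c \<in> E mem e"
  by (rule S, assumption, rule def_upair)

lemma kpair_in:
  assumes "\<And>c. is_upair mem c u v \<Longrightarrow> c \<in> E mem e" "\<And>c. is_upair mem c u u \<Longrightarrow> c \<in> E mem e"
    "is_succ mem g e" "is_kpair mem p u v"
  shows "p \<in> E mem g"
proof -
  obtain c d where "is_upair mem c u v" "is_upair mem d u u" "is_upair mem p c d"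
    using assms(4) unfolding is_kpair_def by blast
  thus ?thesis using assms by (meson S def_upair)
qed

abbreviation "Ord \<equiv> is_ordinal mem"

lemma ord_mem: "Ord x \<Longrightarrow> mem y x \<Longrightarrow> Ord y"
  unfolding is_ordinal_def trans_set_def by blast

lemma ord_succ: "Ord b \<Longrightarrow> is_succ mem s b \<Longrightarrow> Ord s"
  unfolding is_ordinal_def trans_set_def is_succ_def by blast

lemma trich: "Ord x \<Longrightarrow> Ord y \<Longrightarrow> mem x y \<or> x = y \<or> mem y x"
proof (induction x arbitrary: y rule: wf_induct_rule[OF wfm])
  case (1 x)
  note IHx = "1.IH"
  show ?case using 1(3)
  proof (induction y rule: wf_induct_rule[OF wfm])
    case (1 y)
    show ?case
    proof (rule ccontr)
      assume nn: "\<not> (mem x y \<or> x = y \<or> mem y x)"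
      have a: "mem z y" if "mem z x" for z
      proof -
        have "Ord z" using ord_mem \<open>Ord x\<close> that by blast
        hence "mem z y \<or> z = y \<or> mem y z" using IHx[of z y] that \<open>Ord y\<close> by simp
        thus ?thesis using nn that \<open>Ord x\<close> unfolding is_ordinal_def trans_set_def by blast
      qed
      have b: "mem z x" if "mem z y" for z
      proof -
        have "Ord z" using ord_mem \<open>Ord y\<close> that by blast
        hence "mem x z \<or> x = z \<or> mem z x" using "1.IH"[of z] that by simp
        thus ?thesis using nn that \<open>Ord y\<close> unfolding is_ordinal_def trans_set_def by blast
      qed
      have "x = y" using a b ext by blast
      thus False using nn by blast
    qed
  qed
qed

lemma limit_succ:
  assumes "Ord a" "\<not> (\<exists>b. is_succ mem a b)" "mem b a" "is_succ mem s b"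
  shows "mem s a"
proof -
  have "Ord b" using assms ord_mem by blast
  hence "Ord s" using ord_succ assms by blast
  hence "mem s a \<or> s = a \<or> mem a s" using trich assms(1) by blast
  moreover have "s \<noteq> a" using assms by blast
  moreover have "\<not> mem a s" using assms(3,4) asym irrefl unfolding is_succ_def by blast
  ultimately show ?thesis by blast
qed

lemma T: "Ord g \<Longrightarrow> y \<in> E mem g \<Longrightarrow> mem x y \<Longrightarrow> x \<in> E mem g"
proof (induction g arbitrary: y x rule: wf_induct_rule[OF wfm])
  case (1 g)
  have IH: "\<And>h y x. mem h g \<Longrightarrow> y \<in> E mem h \<Longrightarrow> mem x y \<Longrightarrow> x \<in> E mem h"
    using "1.IH" ord_mem[OF "1.prems"(1)] by blast
  show ?case
  proof (cases "is_empty mem g")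
    case True thus ?thesis using "1.prems" E_empty by blast
  next
    case ne: False
    show ?thesis
    proof (cases "\<exists>b. is_succ mem g b")
      case True
      then obtain b where b: "is_succ mem g b" by blast
      have bg: "mem b g" using succ_mem[OF b] .
      have defcase: "x \<in> E mem g" if "definable_over mem (E mem b) y"
      proof -
        have "x \<in> E mem b" using def_sub that "1.prems"(3) by blast
        moreover have "definable_over mem (E mem b) x"
          by (rule def_self) (use IH[OF bg] calculation in blast)+
        ultimately show ?thesis using S[OF b] by blast
      qed
      show ?thesis
      proof (cases "is_empty mem b")
        case True
        thus ?thesis using "1.prems" E_succ0[OF b] by (simp add: is_empty_def)
      next
        case bne: False
        show ?thesis
        proof (cases "\<exists>c. is_succ mem b c")
          case False
          thus ?thesis using "1.prems" E_succ2[OF b bne False] defcase by simp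
        next
          case True
          hence "definable_over mem (E mem b) y \<or>
            (\<exists>c a bb. is_succ mem b c \<and> a \<in> E mem c \<and> bb \<in> E mem c \<and> is_fun mem y a bb)"
            using "1.prems" E_succ1[OF b bne True] by simp
          thus ?thesis
          proof
            assume "definable_over mem (E mem b) y" thus ?thesis by (rule defcase)
          next
            assume "\<exists>c a bb. is_succ mem b c \<and> a \<in> E mem c \<and> bb \<in> E mem c \<and> is_fun mem y a bb"
            then obtain c a bb where c: "is_succ mem b c" and a: "a \<in> E mem c" and bb: "bb \<in> E mem c"
              and f: "is_fun mem y a bb" by blast
            obtain u v where uv: "mem u a" "mem v bb" "is_kpair mem x u v"
              using f "1.prems"(3) unfolding is_fun_def by blast
            have cg: "mem c g" using succ_mem[OF c] bg "1.prems"(1)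
              unfolding is_ordinal_def trans_set_def by blast
            have "u \<in> E mem c" "v \<in> E mem c" using IH[OF cg] a bb uv by blast+
            thus ?thesis using kpair_in[OF _ _ b uv(3)] upair_in c by blast
          qed
        qed
      qed
    next
      case False
      have El: "E mem g = (\<Union>b\<in>{b. mem b g}. E mem b)" using E_lim[OF ne False] .
      then obtain b where b: "mem b g" "y \<in> E mem b" using "1.prems"(2) by auto
      have "x \<in> E mem b" using IH[OF b "1.prems"(3)] .
      thus ?thesis using El b(1) by auto
    qed
  qed
qed

lemma Mono: "Ord g \<Longrightarrow> mem b g \<Longrightarrow> E mem b \<subseteq> E mem g"
proof (induction g arbitrary: b rule: wf_induct_rule[OF wfm])
  case (1 g)
  show ?case
  proof (cases "\<exists>h. is_succ mem g h")
    case True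
    then obtain h where h: "is_succ mem g h" by blast
    have "Ord h" using ord_mem "1.prems" succ_mem[OF h] by blast
    have "E mem h \<subseteq> E mem g"
    proof
      fix y assume y: "y \<in> E mem h"
      have "definable_over mem (E mem h) y"
        by (rule def_self) (use T[OF \<open>Ord h\<close> y] y in blast)+
      thus "y \<in> E mem g" using S[OF h] by blast
    qed
    moreover have "mem b h \<or> b = h" using "1.prems"(2) h unfolding is_succ_def by blast
    moreover have "mem b h \<Longrightarrow> E mem b \<subseteq> E mem h"
      using "1.IH"[of h b] succ_mem[OF h] \<open>Ord h\<close> by simp
    ultimately show ?thesis by blast
  next
    case False
    moreover have "\<not> is_empty mem g" using "1.prems" unfolding is_empty_def by blast
    ultimately show ?thesis using E_lim "1.prems" by blast
  qed
qed

lemma L: "Ord a \<Longrightarrow> is_succ mem s a \<Longrightarrow> y \<in> E mem s \<Longrightarrow> mem x y \<Longrightarrow> x \<in> E mem a"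
proof (induction a arbitrary: s y x rule: wf_induct_rule[OF wfm])
  case (1 a)
  show ?case
  proof (cases "is_empty mem a")
    case True
    thus ?thesis using "1.prems" E_succ0[OF "1.prems"(2)] by (simp add: is_empty_def)
  next
    case ane: False
    show ?thesis
    proof (cases "\<exists>c. is_succ mem a c")
      case False
      thus ?thesis using "1.prems" E_succ2[OF "1.prems"(2) ane False] def_sub by auto
    next
      case True
      hence "definable_over mem (E mem a) y \<or>
        (\<exists>c a' bb. is_succ mem a c \<and> a' \<in> E mem c \<and> bb \<in> E mem c \<and> is_fun mem y a' bb)"
        using "1.prems" E_succ1[OF "1.prems"(2) ane True] by simp
      thus ?thesis
      proof
        assume "definable_over mem (E mem a) y" thus ?thesis using def_sub "1.prems" by blast
      next
        assume "\<exists>c a' bb. is_succ mem a c \<and> a' \<in> E mem c \<and> bb \<in> E mem c \<and> is_fun mem y a' bb"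
        then obtain c a' bb where c: "is_succ mem a c" and a': "a' \<in> E mem c" and bb: "bb \<in> E mem c"
          and f: "is_fun mem y a' bb" by blast
        obtain u v where uv: "mem u a'" "mem v bb" "is_kpair mem x u v"
          using f "1.prems"(4) unfolding is_fun_def by blast
        have ca: "mem c a" using succ_mem[OF c] .
        have oc: "Ord c" using ord_mem "1.prems"(1) ca by blast
        have cne: "\<not> is_empty mem c" using a' E_empty by blast
        show ?thesis
        proof (cases "\<exists>d. is_succ mem c d")
          case True
          then obtain d where d: "is_succ mem c d" by blast
          have dc: "mem d c" using succ_mem[OF d] .
          have od: "Ord d" using ord_mem oc dc by blast
          have da: "mem d a" using dc ca "1.prems"(1) unfolding is_ordinal_def trans_set_def by blast
          have IHd: "\<And>y x. y \<in> E mem c \<Longrightarrow> mem x y \<Longrightarrow> x \<in> E mem d"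
            using "1.IH"[of d] da od d by simp
          have "u \<in> E mem d" "v \<in> E mem d" using IHd a' bb uv by blast+
          thus ?thesis using kpair_in[OF _ _ c uv(3)] upair_in d by blast
        next
          case False
          have El: "E mem c = (\<Union>b\<in>{b. mem b c}. E mem b)" using E_lim[OF cne False] .
          obtain b1 where b1: "mem b1 c" "a' \<in> E mem b1" using a' El by blast
          obtain b2 where b2: "mem b2 c" "bb \<in> E mem b2" using bb El by blast
          have o1: "Ord b1" "Ord b2" using b1 b2 oc ord_mem by blast+
          have u1: "u \<in> E mem b1" using T[OF o1(1) b1(2) uv(1)] .
          have v2: "v \<in> E mem b2" using T[OF o1(2) b2(2) uv(2)] .
          obtain b where b: "mem b c" "u \<in> E mem b" "v \<in> E mem b"
          proof -
            have "mem b1 b2 \<or> b1 = b2 \<or> mem b2 b1" using trich o1 by blast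
            thus ?thesis using that b1 b2 u1 v2 Mono o1 by blast
          qed
          obtain b' where b': "is_succ mem b' b" using succ_ex by blast
          have b'c: "mem b' c" using limit_succ[OF oc False b(1) b'] .
          have sub: "E mem b' \<subseteq> E mem c" using El b'c by blast
          show ?thesis using kpair_in[OF _ _ c uv(3)] upair_in[OF b(2,3) b'] sub b(2,3)
            upair_in[OF b(2) b(2) b'] by blast
        qed
      qed
    qed
  qed
qed

end

theorem lemma4p2:
  fixes mem :: "'v \<Rightarrow> 'v \<Rightarrow> bool" and \<alpha> s x y :: 'v
  assumes "wf {(u, v). mem u v}"
    and "ZF_model mem"
    and "is_ordinal mem \<alpha>"
    and "is_succ mem s \<alpha>"
    and "y \<in> E mem s"
    and "mem x y"
  shows "x \<in> E mem \<alpha>"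
proof -
  interpret zfm mem using assms(1,2) by unfold_locales
  show ?thesis using L assms by blast
qed

end
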